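(* Let the spot price $\pi$ have CDF $F_{\pi}$ and monotonically decreasing density $f_{\pi}$ on $[\underline{\pi},\bar{\pi}]$ with $0\le\underline{\pi}<\bar{\pi}$, and let $t_k,t_e,t_s,t_r>0$ with $t_s<t_e\le 2t_s$. Let $q_1^*$ be the optimal value of $q$ in problem (P1): minimize $\Phi_1(p,q)=q\,t_e\bar{\pi}+\frac{(1-q)t_e\int_{\underline{\pi}}^{p}x f_{\pi}(x)\,dx}{F_{\pi}(p)}$ subject to $(1-q)t_e\le \frac{t_k}{1-F_{\pi}(p)}$, $t_k\left(\frac{1}{F_{\pi}(p)}-1\right)+(1-q)t_e\le t_s$, $q t_e\le t_s$, $\underline{\pi}\le p\le\bar{\pi}$, $0\le q\le 1$. Let $q_3^*$ be the optimal value of $q$ in problem (P3): minimize $\Phi_3(p,q)=q\,t_e\bar{\pi}+\frac{(1-q)t_e}{1-\frac{t_r}{t_k}(1-F_{\pi}(p))}\cdot\frac{\int_{\underline{\pi}}^{p}x f_{\pi}(x)\,dx}{F_{\pi}(p)}$ subject to $q t_e\le t_s$, $\underline{\pi}\le p\le\bar{\pi}$, $0\le q\le 1$, $\frac{(1-q)t_e}{\left(1-\frac{t_r}{t_k}(1-F_{\pi}(p))\right)F_{\pi}(p)}\le t_s$, $t_r<\frac{t_k}{2(1-F_{\pi}(p))}$. Then $|q_1^*-q_3^*|\le \frac{t_k}{t_e}$.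
   Context: (P1) models a one-time spot request with expected deadline guarantee; (P3) models a persistent spot request with recovery time $t_r$ per resumption. In both, $q$ is the fraction of a job of execution time $t_e$ and deadline $t_s$ run on an on-demand instance at price $\bar{\pi}$, $p$ is the spot bid, and spot prices in slots of length $t_k$ are i.i.d. with CDF $F_{\pi}$ and monotonically decreasing density $f_{\pi}$ on $[\underline{\pi},\bar{\pi}]$. *)

theory Defs
  imports "HOL-Analysis.Analysis"
begin

definition pexp :: "(real \<Rightarrow> real) \<Rightarrow> real \<Rightarrow> real \<Rightarrow> real" where
  "pexp f pl p = integral {pl..p} (\<lambda>x. x * f x)"

definition Phi1 :: "(real \<Rightarrow> real) \<Rightarrow> (real \<Rightarrow> real) \<Rightarrow> real \<Rightarrow> real \<Rightarrow> real \<Rightarrow> real \<Rightarrow> real \<Rightarrow> real" where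
  "Phi1 F f pl ph te p q = q * te * ph + (1 - q) * te * pexp f pl p / F p"

definition feasible1 :: "(real \<Rightarrow> real) \<Rightarrow> real \<Rightarrow> real \<Rightarrow> real \<Rightarrow> real \<Rightarrow> real \<Rightarrow> real \<Rightarrow> real \<Rightarrow> bool" where
  "feasible1 F pl ph tk te ts p q \<longleftrightarrow>
     F p > 0 \<and>
     (1 - q) * te * (1 - F p) \<le> tk \<and>
     tk * (1 / F p - 1) + (1 - q) * te \<le> ts \<and>
     q * te \<le> ts \<and>
     pl \<le> p \<and> p \<le> ph \<and> 0 \<le> q \<and> q \<le> 1"

definition Phi3 :: "(real \<Rightarrow> real) \<Rightarrow> (real \<Rightarrow> real) \<Rightarrow> real \<Rightarrow> real \<Rightarrow> real \<Rightarrow> real \<Rightarrow> real \<Rightarrow> real \<Rightarrow> real \<Rightarrow> real" where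
  "Phi3 F f pl ph tk te tr p q =
     q * te * ph + (1 - q) * te / (1 - tr / tk * (1 - F p)) * (pexp f pl p / F p)"

definition feasible3 :: "(real \<Rightarrow> real) \<Rightarrow> real \<Rightarrow> real \<Rightarrow> real \<Rightarrow> real \<Rightarrow> real \<Rightarrow> real \<Rightarrow> real \<Rightarrow> real \<Rightarrow> bool" where
  "feasible3 F pl ph tk te ts tr p q \<longleftrightarrow>
     F p > 0 \<and>
     q * te \<le> ts \<and>
     pl \<le> p \<and> p \<le> ph \<and> 0 \<le> q \<and> q \<le> 1 \<and>
     (1 - q) * te / ((1 - tr / tk * (1 - F p)) * F p) \<le> ts \<and>
     2 * tr * (1 - F p) < tk"

end

theory Submission
  imports Defs
begin

lemma lin_int:
  fixes a b k :: real
  assumes "a \<le> b"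
  shows "((\<lambda>x. k - x) has_integral ((k*b - b^2/2) - (k*a - a^2/2))) {a..b}"
proof -
  have "((\<lambda>x. k*x - x^2/2) has_vector_derivative (k - x)) (at x within {a..b})" for x
    unfolding has_real_derivative_iff_has_vector_derivative[symmetric]
    by (auto intro!: derivative_eq_intros)
  from fundamental_theorem_of_calculus[OF assms this] show ?thesis by simp
qed

lemma tail_bound:
  fixes f :: "real \<Rightarrow> real" and a b :: real
  assumes ab: "a \<le> b" and fi: "f integrable_on {a..b}"
    and gi: "(\<lambda>x. (b - x) * f x) integrable_on {a..b}"
    and dec: "\<forall>x\<in>{a..b}. \<forall>y\<in>{a..b}. x \<le> y \<longrightarrow> f y \<le> f x"
  shows "(b - a) / 2 * integral {a..b} f \<le> integral {a..b} (\<lambda>x. (b - x) * f x)"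
proof -
  define c where "c = (a+b)/2"
  have c: "c \<in> {a..b}" using ab by (auto simp: c_def)
  have lin0: "((\<lambda>x. (b - (b-a)/2) - x) has_integral 0) {a..b}"
  proof -
    have "((b - (b-a)/2)*b - b^2/2) - ((b - (b-a)/2)*a - a^2/2) = 0"
      by (simp add: power2_eq_square field_simps)
    with lin_int[OF ab, of "b - (b-a)/2"] show ?thesis by simp
  qed
  have l1: "(\<lambda>x. ((b - (b-a)/2) - x) * f c) integrable_on {a..b}"
    using lin0 integrable_on_mult_left by blast
  have l1v: "integral {a..b} (\<lambda>x. ((b - (b-a)/2) - x) * f c) = 0"
    using lin0 by (simp add: integral_unique)
  have r1: "(\<lambda>x. (b - x) * f x - (b-a)/2 * f x) integrable_on {a..b}"
    by (intro integrable_diff gi integrable_on_mult_right fi)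
  have pw: "((b - (b-a)/2) - x) * f c \<le> (b - x) * f x - (b-a)/2 * f x" if x: "x \<in> {a..b}" for x
  proof (cases "x \<le> c")
    case True
    then have "f c \<le> f x" using dec c x by auto
    moreover have "0 \<le> (b - (b-a)/2) - x" using True unfolding c_def by (simp add: field_simps)
    ultimately have "((b - (b-a)/2) - x) * f c \<le> ((b - (b-a)/2) - x) * f x"
      by (rule mult_left_mono)
    then show ?thesis by (simp add: algebra_simps)
  next
    case False
    then have "f x \<le> f c" using dec c x by auto
    moreover have "(b - (b-a)/2) - x \<le> 0" using False unfolding c_def by (simp add: field_simps)
    ultimately have "((b - (b-a)/2) - x) * f c \<le> ((b - (b-a)/2) - x) * f x"
      by (rule mult_left_mono_neg)
    then show ?thesis by (simp add: algebra_simps)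
  qed
  have "integral {a..b} (\<lambda>x. ((b - (b-a)/2) - x) * f c) \<le> integral {a..b} (\<lambda>x. (b - x) * f x - (b-a)/2 * f x)"
    by (rule integral_le[OF l1 r1 pw])
  also have "\<dots> = integral {a..b} (\<lambda>x. (b - x) * f x) - (b-a)/2 * integral {a..b} f"
    by (subst integral_diff[OF gi integrable_on_mult_right[OF fi]]) simp
  finally show ?thesis using l1v by linarith
qed

lemma head_bound:
  fixes f :: "real \<Rightarrow> real" and a b c d :: real
  assumes ab: "a \<le> b" and fi: "f integrable_on {a..b}"
    and gi: "(\<lambda>x. (c - x) * f x) integrable_on {a..b}"
    and lb: "\<forall>x\<in>{a..b}. d \<le> f x"
  shows "integral {a..b} (\<lambda>x. (c - x) * f x) \<le> (c - a) * integral {a..b} f - d * (b - a)^2 / 2"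
proof -
  have lin: "((\<lambda>x. x - a) has_integral (b - a)^2/2) {a..b}"
  proof -
    have h: "((\<lambda>x. x - a) has_integral - ((a*b - b^2/2) - (a*a - a^2/2))) {a..b}"
      using has_integral_neg[OF lin_int[OF ab, of "a"]] by (simp only: minus_diff_eq)
    have eq: "- ((a*b - b^2/2) - (a*a - a^2/2)) = (b - a)^2/2"
      by (simp add: power2_eq_square algebra_simps)
    show ?thesis by (subst eq[symmetric]) (rule h)
  qed
  have l1i: "(\<lambda>x. (c - x) * f x) integrable_on {a..b}" by (rule gi)
  have r1: "(\<lambda>x. (c - a) * f x - (x - a) * d) integrable_on {a..b}"
  proof -
    have "(\<lambda>x. x - a) integrable_on {a..b}" using lin by blast
    from integrable_diff[OF integrable_on_mult_right[OF fi] integrable_on_mult_left[OF this]]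
    show ?thesis .
  qed
  have pw: "(c - x) * f x \<le> (c - a) * f x - (x - a) * d" if x: "x \<in> {a..b}" for x
  proof -
    have "(x - a) * d \<le> (x - a) * f x" using x lb by (intro mult_left_mono) auto
    then show ?thesis by (simp add: algebra_simps)
  qed
  have "integral {a..b} (\<lambda>x. (c - x) * f x) \<le> integral {a..b} (\<lambda>x. (c - a) * f x - (x - a) * d)"
    by (rule integral_le[OF l1i r1 pw])
  also have "\<dots> = (c - a) * integral {a..b} f - (b - a)^2/2 * d"
  proof -
    have li: "(\<lambda>x. x - a) integrable_on {a..b}" using lin by blast
    show ?thesis
      by (subst integral_diff[OF integrable_on_mult_right[OF fi] integrable_on_mult_left[OF li]])
        (simp add: integral_unique[OF lin])
  qed
  finally show ?thesis by (simp add: algebra_simps)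
qed

lemma alg1:
  fixes U X Y F T d g h ts tk :: real
  assumes F0: "F > 0" and T: "T = 1 - F" and T0: "T \<ge> 0" and UT: "U * T \<le> tk"
    and opt: "ts*F*Y \<le> U*X" and YX: "X + h/2*T \<le> Y"
    and head: "X \<le> F*(g+h) - d*g^2/2" and Td: "T \<le> d*h" and Y0: "Y > 0" and ts: "ts > 0"
    and g0: "g \<ge> 0" and h0: "h \<ge> 0" and d0: "d \<ge> 0" and U0: "U \<ge> 0" and X0: "X \<ge> 0"
  shows "ts - tk \<le> U"
proof (rule ccontr)
  assume "\<not> ?thesis" hence Ult: "U < ts - tk" by simp
  show False
  proof (cases "T = 0")
    case True
    then have F1: "F = 1" using T by simp
    hence o: "ts*Y \<le> U*X" using opt by simp
    have "X \<le> Y" using YX True by simp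
    hence "ts * X \<le> ts*Y" using ts by (simp add: mult_left_mono)
    have "tk \<ge> 0" using UT True by simp
    hence "U < ts" using Ult by simp
    have "(ts - U) * X \<le> 0" using o \<open>ts * X \<le> ts*Y\<close> by (simp add: algebra_simps)
    hence "X \<le> 0" using \<open>U < ts\<close> by (simp add: mult_le_0_iff)
    hence "U * X \<le> 0" using U0 by (simp add: mult_nonneg_nonpos)
    moreover have "ts*Y > 0" using Y0 ts by simp
    ultimately show False using o by linarith
  next
    case False
    hence Tp: "T > 0" using T0 by simp
    have dh: "d*h > 0" using Td Tp by simp
    have hp: "h > 0" using dh h0 d0 by (metis less_eq_real_def mult_zero_right)
    have s1: "2*h*T*X \<le> 2*h*T*(F*(g+h) - d*g^2/2)"
      using head hp Tp by (intro mult_left_mono) auto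
    have s2: "T*T*g^2 \<le> T*(d*h)*g^2"
      using Td Tp by (intro mult_right_mono mult_left_mono) auto
    have s3: "F*h^2*(2-F) - (2*h*T*F*(g+h) - T*T*g^2) = (F*h - T*g)^2"
      by (simp add: T power2_eq_square algebra_simps)
    have s4: "2*h*T*(F*(g+h) - d*g^2/2) = 2*h*T*F*(g+h) - T*(d*h)*g^2"
      by (simp add: algebra_simps)
    have s5: "0 \<le> (F*h - T*g)^2" by simp
    have k1: "h*(2*T*X) \<le> h*(F*h*(2-F))"
    proof -
      have "h*(2*T*X) = 2*h*T*X" by simp
      also have "\<dots> \<le> 2*h*T*(F*(g+h) - d*g^2/2)" by (rule s1)
      also have "\<dots> = 2*h*T*F*(g+h) - T*(d*h)*g^2" by (rule s4)
      also have "\<dots> \<le> 2*h*T*F*(g+h) - T*T*g^2" using s2 by linarith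
      also have "\<dots> \<le> F*h^2*(2-F)" using s3 s5 by linarith
      also have "\<dots> = h*(F*h*(2-F))" by (simp add: power2_eq_square)
      finally show ?thesis .
    qed
    have k2: "2*T*X \<le> F*h*(2-F)" using k1 hp by simp
    have A: "ts*F*(X + h/2*T) \<le> U*X"
    proof -
      have "ts*F*(X + h/2*T) \<le> ts*F*Y" using YX ts F0 by (intro mult_left_mono) auto
      thus ?thesis using opt by linarith
    qed
    have B: "X*(U - ts*F) \<ge> ts*F*T*h/2" using A by (simp add: algebra_simps)
    have Bp: "ts*F*T*h/2 > 0" using ts F0 Tp hp by simp
    have C: "U - ts*F > 0"
    proof (rule ccontr)
      assume "\<not> U - ts*F > 0"
      hence "X*(U - ts*F) \<le> 0" using X0 by (simp add: mult_nonneg_nonpos)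
      thus False using B Bp by simp
    qed
    have D: "(2*T*X)*(U - ts*F) \<le> (F*h*(2-F))*(U - ts*F)"
      using k2 C by (intro mult_right_mono) auto
    have E: "2*T*(ts*F*T*h/2) \<le> 2*T*(X*(U - ts*F))"
      using B Tp by (intro mult_left_mono) auto
    have G: "(F*h)*(ts*T*T) \<le> (F*h)*((2-F)*(U - ts*F))"
      using D E by (simp add: algebra_simps)
    have H: "ts*T*T \<le> (2-F)*(U - ts*F)"
      using G F0 hp by simp
    have I: "ts \<le> (1+T)*U"
      using H by (simp add: T algebra_simps power2_eq_square)
    show False using I UT Ult by (simp add: algebra_simps)
  qed
qed

lemma alg3:
  fixes V X Y c ts :: real
  assumes opt: "ts*Y \<le> V*(X - c)" and V0: "V \<ge> 0" and Vts: "V \<le> ts" and XY: "X \<le> Y"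
    and c0: "c \<ge> 0" and Y0: "Y > 0" and ts: "ts > 0"
  shows "c = 0 \<and> V = ts"
proof -
  have "ts*Y > 0" using Y0 ts by simp
  hence p: "V*(X - c) > 0" using opt by linarith
  have Vp: "V > 0" using p V0 by (metis less_eq_real_def mult_zero_left)
  have Xc: "X - c > 0" using p Vp by (simp add: zero_less_mult_iff)
  have "V*(X-c) \<le> ts*(X-c)" using Vts Xc by (intro mult_right_mono) auto
  also have "\<dots> \<le> ts*(Y - c)" using XY ts by (intro mult_left_mono) auto
  finally have q: "ts*Y \<le> ts*(Y-c)" using opt by simp
  hence "c * ts \<le> 0" by (simp add: algebra_simps)
  hence "c \<le> 0" using ts by (simp add: mult_le_0_iff)
  hence c: "c = 0" using c0 by simp
  have "ts*Y \<le> V*X" using opt c by simp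
  moreover have "V*X \<le> ts * X" using Vts Xc c by (intro mult_right_mono) auto
  moreover have "ts*X \<le> ts*Y" using XY ts by (intro mult_left_mono) auto
  ultimately have "V*X = ts*X" by linarith
  hence "V = ts" using Xc c by simp
  with c show ?thesis by simp
qed

theorem lemma8:
  fixes F f :: "real \<Rightarrow> real" and pl ph tk te ts tr :: real
    and p1 q1 p3 q3 :: real
  assumes prices: "0 \<le> pl" "pl < ph"
    and dens_nonneg: "\<forall>x\<in>{pl..ph}. 0 \<le> f x"
    and dens_decr: "\<forall>x\<in>{pl..ph}. \<forall>y\<in>{pl..ph}. x \<le> y \<longrightarrow> f y \<le> f x"
    and dens_int: "f integrable_on {pl..ph}"
    and dens_total: "integral {pl..ph} f = 1"
    and cdf: "\<forall>x\<in>{pl..ph}. F x = integral {pl..x} f"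
    and times: "tk > 0" "te > 0" "ts > 0" "tr > 0" "ts < te" "te \<le> 2 * ts"
    and opt1: "feasible1 F pl ph tk te ts p1 q1"
      "\<forall>p q. feasible1 F pl ph tk te ts p q \<longrightarrow> Phi1 F f pl ph te p1 q1 \<le> Phi1 F f pl ph te p q"
    and opt3: "feasible3 F pl ph tk te ts tr p3 q3"
      "\<forall>p q. feasible3 F pl ph tk te ts tr p q \<longrightarrow> Phi3 F f pl ph tk te tr p3 q3 \<le> Phi3 F f pl ph tk te tr p q"
  shows "\<bar>q1 - q3\<bar> \<le> tk / te"
proof -
  define G where "G = (\<lambda>x. (ph - x) * f x)"
  define Y where "Y = integral {pl..ph} G"
  have dec': "\<forall>x\<in>{a..b}. \<forall>y\<in>{a..b}. x \<le> y \<longrightarrow> f y \<le> f x" if "pl \<le> a" "b \<le> ph" for a b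
    using dens_decr that by auto
  have mono: "mono_on {pl..ph} (\<lambda>x. - G x)"
  proof (rule mono_onI)
    fix x y assume xy: "x \<in> {pl..ph}" "y \<in> {pl..ph}" "x \<le> y"
    have "(ph - y) * f y \<le> (ph - x) * f x"
      using xy dens_decr dens_nonneg by (intro mult_mono) auto
    thus "- G x \<le> - G y" by (simp add: G_def)
  qed
  have gint: "G integrable_on {pl..ph}"
    using integrable_neg[OF integrable_on_mono_on[OF mono]] by simp
  have fi: "f integrable_on {a..b}" "G integrable_on {a..b}" if "pl \<le> a" "b \<le> ph" for a b
    using integrable_on_subinterval[OF dens_int] integrable_on_subinterval[OF gint] that by auto
  have Fle: "F p = integral {pl..p} f" if "p \<in> {pl..ph}" for p using cdf that by auto
  have pexp_eq: "pexp f pl p = ph * integral {pl..p} f - integral {pl..p} G" if p: "p \<in> {pl..ph}" for p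
  proof -
    have e: "(\<lambda>x. x * f x) = (\<lambda>x. ph * f x - G x)" by (auto simp: G_def fun_eq_iff algebra_simps)
    have "pexp f pl p = integral {pl..p} (\<lambda>x. ph * f x - G x)" unfolding pexp_def e ..
    also have "\<dots> = ph * integral {pl..p} f - integral {pl..p} G"
      using p by (subst integral_diff) (auto intro: integrable_on_mult_right fi)
    finally show ?thesis .
  qed
  have splitF: "integral {pl..p} f + integral {p..ph} f = 1" if p: "p \<in> {pl..ph}" for p
    using Henstock_Kurzweil_Integration.integral_combine[where a=pl and c=p and b=ph and f=f] p dens_int dens_total by auto
  have splitG: "integral {pl..p} G + integral {p..ph} G = Y" if p: "p \<in> {pl..ph}" for p
    using Henstock_Kurzweil_Integration.integral_combine[where a=pl and c=p and b=ph and f=G] p gint by (auto simp: Y_def)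
  have tail: "(ph - p) / 2 * integral {p..ph} f \<le> integral {p..ph} G" if p: "p \<in> {pl..ph}" for p
    using tail_bound[where a=p and b=ph and f=f] p fi[of p ph] dec'[of p ph] by (auto simp: G_def)
  have Tle: "integral {p..ph} f \<le> f p * (ph - p)" if p: "p \<in> {pl..ph}" for p
  proof -
    have "integral {p..ph} f \<le> integral {p..ph} (\<lambda>x. f p)"
      using p fi[of p ph] dens_decr by (intro integral_le) auto
    thus ?thesis using p by (simp add: mult.commute)
  qed
  have T0: "0 \<le> integral {p..ph} f" if p: "p \<in> {pl..ph}" for p
    using p fi[of p ph] dens_nonneg by (intro integral_nonneg) auto
  have head: "integral {pl..p} G \<le> (ph - pl) * integral {pl..p} f - f p * (p - pl)^2 / 2"
    if p: "p \<in> {pl..ph}" for p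
    using head_bound[where a=pl and b=p and f=f and c=ph and d="f p"] p fi[of pl p] dens_decr by (auto simp: G_def)
  have X0: "0 \<le> integral {pl..p} G" if p: "p \<in> {pl..ph}" for p
    using p fi[of pl p] dens_nonneg by (intro integral_nonneg) (auto simp: G_def)
  have Ypos: "Y > 0"
  proof -
    have "(ph - pl) / 2 * integral {pl..ph} f \<le> Y"
      using tail_bound[where a=pl and b=ph and f=f] prices dens_int gint dens_decr by (auto simp: G_def Y_def)
    thus ?thesis using dens_total prices by simp
  qed
  have Fph: "F ph = 1" using Fle[of ph] prices dens_total by simp
  have pexph: "pexp f pl ph = ph - Y" using pexp_eq[of ph] prices dens_total by (simp add: Y_def)
  define q0 where "q0 = 1 - ts / te"
  have q0te: "q0 * te = te - ts" using times by (simp add: q0_def field_simps)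
  have q0te': "(1 - q0) * te = ts" using times by (simp add: q0_def field_simps)
  have q01: "0 \<le> q0" "q0 \<le> 1" using times by (auto simp: q0_def field_simps)
  have php: "ph > 0" using prices by simp
  define U where "U = (1 - q1) * te"
  have f1: "F p1 > 0" "(1 - q1) * te * (1 - F p1) \<le> tk" "tk * (1 / F p1 - 1) + (1 - q1) * te \<le> ts"
    "q1 * te \<le> ts" "pl \<le> p1" "p1 \<le> ph" "0 \<le> q1" "q1 \<le> 1"
    using opt1(1) unfolding feasible1_def by auto
  have p1: "p1 \<in> {pl..ph}" using f1 by simp
  define F1 where "F1 = integral {pl..p1} f"
  define X1 where "X1 = integral {pl..p1} G"
  define T1 where "T1 = integral {p1..ph} f"
  have F1e: "F p1 = F1" using Fle[OF p1] by (simp add: F1_def)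
  have T1e: "T1 = 1 - F1" using splitF[OF p1] by (simp add: F1_def T1_def)
  have feas0: "feasible1 F pl ph tk te ts ph q0"
    unfolding feasible1_def using Fph q0te q0te' q01 prices times by auto
  have "Phi1 F f pl ph te p1 q1 \<le> Phi1 F f pl ph te ph q0" using opt1(2) feas0 by blast
  also have "Phi1 F f pl ph te ph q0 = te * ph - ts * Y"
    unfolding Phi1_def Fph pexph q0te q0te' by (simp add: algebra_simps)
  finally have o1: "Phi1 F f pl ph te p1 q1 \<le> te * ph - ts * Y" .
  have "Phi1 F f pl ph te p1 q1 = te * ph - U * X1 / F1"
    unfolding Phi1_def F1e pexp_eq[OF p1] U_def using f1(1) F1e
    by (simp add: F1_def X1_def field_simps)
  with o1 have "ts * Y \<le> U * X1 / F1" by simp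
  hence opt1': "ts * F1 * Y \<le> U * X1" using f1(1) F1e by (simp add: field_simps)
  have U1: "ts - tk \<le> U"
  proof (rule alg1[where F=F1 and T=T1 and U=U and tk=tk and ts=ts and Y=Y and X=X1 and h="ph - p1" and g="p1 - pl" and d="f p1"])
    show "0 < F1" using f1(1) F1e by simp
    show "T1 = 1 - F1" by (rule T1e)
    show "0 \<le> T1" using T0[OF p1] by (simp add: T1_def)
    show "U * T1 \<le> tk" using f1(2) F1e T1e by (simp add: U_def)
    show "ts * F1 * Y \<le> U * X1" by (rule opt1')
    show "X1 + (ph - p1) / 2 * T1 \<le> Y" using splitG[OF p1] tail[OF p1] by (simp add: X1_def T1_def)
    show "X1 \<le> F1 * (p1 - pl + (ph - p1)) - f p1 * (p1 - pl)\<^sup>2 / 2"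
      using head[OF p1] by (simp add: X1_def F1_def algebra_simps)
    show "T1 \<le> f p1 * (ph - p1)" using Tle[OF p1] by (simp add: T1_def)
    show "0 < Y" by (rule Ypos)
    show "0 < ts" using times by simp
    show "0 \<le> p1 - pl" "0 \<le> ph - p1" using p1 by auto
    show "0 \<le> f p1" using p1 dens_nonneg by auto
    show "0 \<le> U" using f1 times by (simp add: U_def)
    show "0 \<le> X1" using X0[OF p1] by (simp add: X1_def)
  qed
  have U1': "U \<le> ts"
  proof -
    have "F1 \<le> 1" using T1e T0[OF p1] by (simp add: T1_def)
    hence "1 / F1 \<ge> 1" using f1(1) F1e by simp
    hence "tk * (1 / F1 - 1) \<ge> 0" using times by simp
    thus ?thesis using f1(3) F1e by (simp add: U_def)
  qed
  define U3 where "U3 = (1 - q3) * te"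
  have f3: "F p3 > 0" "q3 * te \<le> ts" "pl \<le> p3" "p3 \<le> ph" "0 \<le> q3" "q3 \<le> 1"
    "(1 - q3) * te / ((1 - tr / tk * (1 - F p3)) * F p3) \<le> ts" "2 * tr * (1 - F p3) < tk"
    using opt3(1) unfolding feasible3_def by auto
  have p3: "p3 \<in> {pl..ph}" using f3 by simp
  define F3 where "F3 = integral {pl..p3} f"
  define X3 where "X3 = integral {pl..p3} G"
  define T3 where "T3 = integral {p3..ph} f"
  define Dn where "Dn = 1 - tr / tk * T3"
  define V where "V = U3 / (Dn * F3)"
  define c where "c = ph * F3 * (tr / tk) * T3"
  have F3e: "F p3 = F3" using Fle[OF p3] by (simp add: F3_def)
  have T3e: "T3 = 1 - F3" using splitF[OF p3] by (simp add: F3_def T3_def)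
  have F3p: "F3 > 0" using f3(1) F3e by simp
  have T3n: "T3 \<ge> 0" using T0[OF p3] by (simp add: T3_def)
  have Dnp: "Dn > 0"
  proof -
    have "2 * tr * T3 < tk" using f3(8) F3e T3e by simp
    hence "tr * T3 / tk < 1/2" using times by (simp add: field_simps)
    moreover have "tr / tk * T3 = tr * T3 / tk" by simp
    ultimately have "tr / tk * T3 < 1/2" by (simp only:)
    moreover have "\<And>x::real. x < 1/2 \<Longrightarrow> 0 < 1 - x" by simp
    ultimately show ?thesis unfolding Dn_def by blast
  qed
  have feas30: "feasible3 F pl ph tk te ts tr ph q0"
    unfolding feasible3_def using Fph q0te q0te' q01 prices times by auto
  have "Phi3 F f pl ph tk te tr p3 q3 \<le> Phi3 F f pl ph tk te tr ph q0" using opt3(2) feas30 by blast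
  also have "Phi3 F f pl ph tk te tr ph q0 = te * ph - ts * Y"
    unfolding Phi3_def Fph pexph q0te q0te' by (simp add: algebra_simps)
  finally have o3: "Phi3 F f pl ph tk te tr p3 q3 \<le> te * ph - ts * Y" .
  have U3V: "U3 = V * Dn * F3" using Dnp F3p by (simp add: V_def)
  have "Phi3 F f pl ph tk te tr p3 q3 = q3 * te * ph + U3 / Dn * ((ph * F3 - X3) / F3)"
    unfolding Phi3_def F3e pexp_eq[OF p3] U3_def using T3e
    by (simp add: F3_def X3_def Dn_def)
  also have "\<dots> = te * ph - V * (X3 - c)"
  proof -
    have e1: "q3 * te * ph = te * ph - U3 * ph" by (simp add: U3_def algebra_simps)
    have e2: "U3 / Dn * ((ph * F3 - X3) / F3) = V * (ph * F3) - V * X3"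
      using Dnp F3p by (simp add: V_def field_simps)
    have e3: "U3 * ph = V * (ph * F3) - V * c"
      unfolding U3V c_def Dn_def by (simp add: algebra_simps)
    have e4: "V * (X3 - c) = V * X3 - V * c" by (simp add: algebra_simps)
    show ?thesis using e1 e2 e3 e4 by linarith
  qed
  finally have "ts * Y \<le> V * (X3 - c)" using o3 by simp
  have a3: "c = 0 \<and> V = ts"
  proof (rule alg3[where ts=ts and Y=Y and V=V and X=X3 and c=c])
    show "ts * Y \<le> V * (X3 - c)" by fact
    show "0 \<le> V" using f3 times Dnp F3p by (simp add: V_def U3_def)
    show "V \<le> ts" using f3(7) F3e T3e by (simp add: V_def U3_def Dn_def)
    show "X3 \<le> Y"
    proof -
      have "0 \<le> (ph - p3) / 2 * T3" using p3 T3n by simp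
      thus ?thesis using splitG[OF p3] tail[OF p3] unfolding X3_def T3_def by linarith
    qed
    show "0 \<le> c" using php F3p times T3n by (simp add: c_def)
    show "0 < Y" by (rule Ypos)
    show "0 < ts" using times by simp
  qed
  have "T3 = 0" using a3 php F3p times by (simp add: c_def)
  hence "F3 = 1" "Dn = 1" using T3e by (auto simp: Dn_def)
  hence U3ts: "U3 = ts" using a3 U3V by simp
  have "q1 - q3 = (U3 - U) / te" using times by (simp add: U_def U3_def field_simps)
  hence "\<bar>q1 - q3\<bar> = (ts - U) / te" using U1' U3ts times by simp
  also have "\<dots> \<le> tk / te" using U1 times by (simp add: divide_right_mono)
  finally show ?thesis .
qed

end
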